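(* Let $p\ge 1$ and $c>0$ be constants, let $a>0$, and let $x_a:[0,\infty)\to\mathbb{R}$ be the unique solution of $$x'''+c\,x^p\, x''=0,\qquad x(0)=0=x'(0),\quad x''(0)=a$$ (which is defined on all of $[0,\infty)$). Then $\lim_{t\to\infty} x_a''(t)=0$, and the limit $h(a):=\lim_{t\to\infty} x_a'(t)$ exists, is finite and is positive. *)

theory Defs
  imports "HOL-Analysis.Analysis"
begin

end

theory Submission
  imports Defs "HOL-Real_Asymp.Real_Asymp"
begin

lemma mono_helper:
  fixes f f' :: "real \<Rightarrow> real"
  assumes d: "\<And>t. t \<ge> 0 \<Longrightarrow> (f has_real_derivative f' t) (at t within {0..})"
    and uv: "0 \<le> u" "u \<le> v" and pos: "\<And>t. u < t \<Longrightarrow> t < v \<Longrightarrow> f' t \<ge> 0"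
  shows "f u \<le> f v"
proof (rule DERIV_nonneg_imp_increasing_open[OF uv(2)])
  fix t assume t: "u < t" "t < v"
  have "t \<in> interior {0::real..}" using t uv by simp
  hence "at t within {0..} = at t" by (rule at_within_interior)
  with d[of t] t uv have "DERIV f t :> f' t" by simp
  thus "\<exists>y. DERIV f t :> y \<and> y \<ge> 0" using pos t by blast
next
  have "continuous_on {0..} f"
    using d by (meson DERIV_continuous continuous_on_eq_continuous_within atLeast_iff)
  thus "continuous_on {u..v} f" by (rule continuous_on_subset) (use uv in auto)
qed

lemma cont_helper:
  fixes f f' :: "real \<Rightarrow> real"
  assumes d: "\<And>t. t \<ge> 0 \<Longrightarrow> (f has_real_derivative f' t) (at t within {0..})"
  shows "continuous_on {0..} f"
  using d by (meson DERIV_continuous continuous_on_eq_continuous_within atLeast_iff)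

lemma strict_helper:
  fixes f f' :: "real \<Rightarrow> real"
  assumes d: "\<And>t. t \<ge> 0 \<Longrightarrow> (f has_real_derivative f' t) (at t within {0..})"
    and uv: "0 \<le> u" "u < v" and pos: "\<And>t. u < t \<Longrightarrow> t < v \<Longrightarrow> f' t > 0"
  shows "f u < f v"
proof (rule DERIV_pos_imp_increasing_open[OF uv(2)])
  fix t assume t: "u < t" "t < v"
  have "t \<in> interior {0::real..}" using t uv by simp
  hence "at t within {0..} = at t" by (rule at_within_interior)
  with d[of t] t uv have "DERIV f t :> f' t" by simp
  thus "\<exists>y. DERIV f t :> y \<and> y > 0" using pos t by blast
next
  have "continuous_on {0..} f" by (rule cont_helper[OF d])
  thus "continuous_on {u..v} f" by (rule continuous_on_subset) (use uv in auto)
qed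

theorem lemma2:
  fixes p c a :: real and x x1 x2 :: "real \<Rightarrow> real"
  assumes "p \<ge> 1" and "c > 0" and "a > 0"
    and "\<And>t. t \<ge> 0 \<Longrightarrow> (x has_real_derivative x1 t) (at t within {0..})"
    and "\<And>t. t \<ge> 0 \<Longrightarrow> (x1 has_real_derivative x2 t) (at t within {0..})"
    and "\<And>t. t \<ge> 0 \<Longrightarrow> (x2 has_real_derivative (- c * (x t) powr p * x2 t)) (at t within {0..})"
    and "x 0 = 0" and "x1 0 = 0" and "x2 0 = a"
  shows "(x2 \<longlongrightarrow> 0) at_top \<and> (\<exists>h. (x1 \<longlongrightarrow> h) at_top \<and> h > 0)"
proof -
  note dx = assms(4) and dx1 = assms(5) and dx2 = assms(6)
  have x2pos: "x2 t > 0" if "t \<ge> 0" for t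
  proof (rule ccontr)
    assume "\<not> x2 t > 0"
    define S where "S = {0..} \<inter> x2 -` {..0}"
    have "closed S" unfolding S_def
      by (rule continuous_closed_preimage[OF cont_helper[OF dx2]]) auto
    moreover have "S \<noteq> {}" using that \<open>\<not> x2 t > 0\<close> by (auto simp: S_def)
    moreover have "bdd_below S" by (auto simp: S_def bdd_below_def)
    ultimately have "Inf S \<in> S" by (rule closed_contains_Inf[rotated 2])
    define t0 where "t0 = Inf S"
    have t0: "t0 \<ge> 0" "x2 t0 \<le> 0" using \<open>Inf S \<in> S\<close> by (auto simp: S_def t0_def)
    have before: "x2 s > 0" if "0 \<le> s" "s < t0" for s
    proof (rule ccontr)
      assume "\<not> x2 s > 0"
      hence "s \<in> S" using that by (auto simp: S_def)
      hence "t0 \<le> s" unfolding t0_def using \<open>bdd_below S\<close> by (rule cInf_lower)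
      thus False using that by simp
    qed
    have t0pos: "t0 > 0" using t0 assms(9) assms(3) by (cases "t0 = 0") auto
    have x1nn: "x1 s \<ge> 0" if "0 \<le> s" "s \<le> t0" for s
    proof -
      have "x1 0 \<le> x1 s" by (rule mono_helper[OF dx1]) (use that before in \<open>auto intro: less_imp_le\<close>)
      thus ?thesis using assms(8) by simp
    qed
    have xle: "x s \<le> x t0" if "0 \<le> s" "s \<le> t0" for s
      by (rule mono_helper[OF dx]) (use that x1nn in auto)
    have xnn: "x s \<ge> 0" if "0 \<le> s" "s \<le> t0" for s
    proof -
      have "x 0 \<le> x s" by (rule mono_helper[OF dx]) (use that x1nn in auto)
      thus ?thesis using assms(7) by simp
    qed
    define M where "M = c * x t0 powr p"
    define g where "g s = x2 s * exp (M * s)" for s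
    define g' where "g' s = exp (M * s) * x2 s * (M - c * x s powr p)" for s
    have dg: "(g has_real_derivative g' s) (at s within {0..})" if "s \<ge> 0" for s
    proof -
      have e: "((\<lambda>s. exp (M * s)) has_real_derivative exp (M * s) * M) (at s within {0..})"
        by (auto intro!: derivative_eq_intros)
      show ?thesis unfolding g_def g'_def
        by (rule DERIV_cong[OF DERIV_mult[OF dx2[OF that] e]]) (simp add: algebra_simps)
    qed
    have "g 0 \<le> g t0"
    proof (rule mono_helper[OF dg])
      fix s assume s: "0 < s" "s < t0"
      have "x s powr p \<le> x t0 powr p"
        using xnn xle s assms(1) by (intro powr_mono2) auto
      hence "c * x s powr p \<le> M" unfolding M_def using assms(2) by simp
      thus "g' s \<ge> 0" unfolding g'_def using before[of s] s by simp
    qed (use t0 in auto)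
    hence "a \<le> x2 t0 * exp (M * t0)" by (simp add: g_def assms(9))
    moreover have "x2 t0 * exp (M * t0) \<le> 0" using t0 by (simp add: mult_nonpos_nonneg)
    ultimately show False using assms(3) by simp
  qed
  have x1mono: "x1 s \<le> x1 t" if "0 \<le> s" "s \<le> t" for s t
    by (rule mono_helper[OF dx1]) (use that x2pos in \<open>auto intro: less_imp_le\<close>)
  have x1nn: "x1 s \<ge> 0" if "0 \<le> s" for s using x1mono[of 0 s] that assms(8) by simp
  have xmono: "x s \<le> x t" if "0 \<le> s" "s \<le> t" for s t
    by (rule mono_helper[OF dx]) (use that x1nn in auto)
  define b where "b = x1 1"
  have "x1 0 < x1 1" by (rule strict_helper[OF dx1]) (use x2pos in auto)
  hence b: "b > 0" unfolding b_def using assms(8) by simp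
  have xlin: "x t \<ge> b * (t - 1)" if "t \<ge> 1" for t
  proof -
    have "(\<lambda>s. x s - b * s) 1 \<le> (\<lambda>s. x s - b * s) t"
    proof (rule mono_helper[where f="\<lambda>s. x s - b * s" and f'="\<lambda>s. x1 s - b"])
      fix s :: real assume "s \<ge> 0"
      show "((\<lambda>s. x s - b * s) has_real_derivative x1 s - b) (at s within {0..})"
      proof -
        have e: "((\<lambda>s. b * s) has_real_derivative b) (at s within {0..})"
          by (auto intro!: derivative_eq_intros)
        show ?thesis by (rule DERIV_diff[OF dx[OF \<open>s \<ge> 0\<close>] e])
      qed
    next
      fix s :: real assume "1 < s" "s < t"
      thus "x1 s - b \<ge> 0" unfolding b_def using x1mono[of 1 s] by simp
    qed (use that in auto)
    moreover have "x 1 \<ge> 0" using xmono[of 0 1] assms(7) by simp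
    ultimately show ?thesis by (simp add: algebra_simps)
  qed
  define T where "T = 1 + 1 / b"
  have T: "T \<ge> 1" using b by (simp add: T_def)
  have xT: "x T \<ge> 1" using xlin[OF T] b by (simp add: T_def)
  have xbig: "x t powr p \<ge> 1" if "t \<ge> T" for t
    using xmono[of T t] xT that T assms(1) by (intro ge_one_powr_ge_zero) auto
  define K where "K = x2 T * exp (c * T)"
  have x2bound: "x2 t \<le> K * exp (- c * t)" if "t \<ge> T" for t
  proof -
    define g where "g s = - (x2 s * exp (c * s))" for s
    define g' where "g' s = exp (c * s) * x2 s * c * (x s powr p - 1)" for s
    have dg: "(g has_real_derivative g' s) (at s within {0..})" if "s \<ge> 0" for s
    proof -
      have e: "((\<lambda>s. exp (c * s)) has_real_derivative exp (c * s) * c) (at s within {0..})"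
        by (auto intro!: derivative_eq_intros)
      show ?thesis unfolding g_def g'_def
        by (rule DERIV_cong[OF DERIV_minus[OF DERIV_mult[OF dx2[OF that] e]]]) (simp add: algebra_simps)
    qed
    have "g T \<le> g t"
    proof (rule mono_helper[OF dg])
      fix s assume s: "T < s" "s < t"
      thus "g' s \<ge> 0" unfolding g'_def using xbig[of s] x2pos[of s] T assms(2) by simp
    qed (use that T in auto)
    hence "x2 t * exp (c * t) \<le> K" by (simp add: g_def K_def)
    hence "x2 t * exp (c * t) * exp (- c * t) \<le> K * exp (- c * t)" by simp
    thus ?thesis by (simp add: exp_minus_inverse mult.assoc flip: exp_add)
  qed
  define B where "B = x1 T + K / c * exp (- c * T)"
  have x1bound: "x1 t \<le> B" if "t \<ge> 0" for t
  proof (cases "t \<ge> T")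
    case True
    define g where "g s = - (x1 s + K / c * exp (- c * s))" for s
    define g' where "g' s = K * exp (- c * s) - x2 s" for s
    have dg: "(g has_real_derivative g' s) (at s within {0..})" if "s \<ge> 0" for s
    proof -
      have e: "((\<lambda>s. K / c * exp (- c * s)) has_real_derivative K / c * (exp (- c * s) * (- c))) (at s within {0..})"
        by (auto intro!: derivative_eq_intros)
      show ?thesis unfolding g_def g'_def using assms(2)
        by (intro DERIV_cong[OF DERIV_minus[OF DERIV_add[OF dx1[OF that] e]]]) (simp add: algebra_simps)
    qed
    have "g T \<le> g t"
    proof (rule mono_helper[OF dg])
      fix s assume s: "T < s" "s < t"
      thus "g' s \<ge> 0" unfolding g'_def using x2bound[of s] by simp
    qed (use True T in auto)
    moreover have "K \<ge> 0" unfolding K_def using x2pos[of T] T by simp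
    ultimately have "- x1 T - K * exp (- (c * T)) / c \<le> - x1 t - K * exp (- (c * t)) / c"
      by (simp add: g_def)
    moreover have "K * exp (- (c * t)) / c \<ge> 0" using \<open>K \<ge> 0\<close> assms(2) by simp
    ultimately show ?thesis by (simp add: B_def)
  next
    case False
    have "K \<ge> 0" unfolding K_def using x2pos[of T] T by simp
    hence "x1 t \<le> x1 T" using x1mono[of t T] False that by simp
    moreover have "K * exp (- (c * T)) / c \<ge> 0" using \<open>K \<ge> 0\<close> assms(2) by simp
    ultimately show ?thesis by (simp add: B_def)
  qed
  have lim2: "(x2 \<longlongrightarrow> 0) at_top"
  proof (rule tendsto_sandwich[of "\<lambda>_. 0" _ _ "\<lambda>t. K * exp (- c * t)"])
    show "\<forall>\<^sub>F t in at_top. 0 \<le> x2 t"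
      using eventually_ge_at_top[of 0] by eventually_elim (use x2pos in force)
    show "\<forall>\<^sub>F t in at_top. x2 t \<le> K * exp (- c * t)"
      using eventually_ge_at_top[of T] by eventually_elim (use x2bound in force)
    show "((\<lambda>t. K * exp (- c * t)) \<longlongrightarrow> 0) at_top" using assms(2) by real_asymp
  qed simp
  define h where "h = Sup (x1 ` {0..})"
  have bdd: "bdd_above (x1 ` {0..})" using x1bound by (auto simp: bdd_above_def)
  have le_h: "x1 t \<le> h" if "t \<ge> 0" for t
    unfolding h_def using bdd that by (intro cSup_upper) auto
  have lim1: "(x1 \<longlongrightarrow> h) at_top"
  proof (rule order_tendstoI)
    fix y assume "y < h"
    then obtain s where s: "s \<ge> 0" "y < x1 s"
      unfolding h_def using less_cSup_iff[OF _ bdd, of y] by auto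
    show "\<forall>\<^sub>F t in at_top. y < x1 t"
      using eventually_ge_at_top[of s] by eventually_elim (use s x1mono in force)
  next
    fix y assume "y > h"
    show "\<forall>\<^sub>F t in at_top. x1 t < y"
      using eventually_ge_at_top[of 0] by eventually_elim (use le_h \<open>y > h\<close> in force)
  qed
  have "h > 0" using le_h[of 1] b by (simp add: b_def)
  thus ?thesis using lim1 lim2 by blast
qed

end
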